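(* Assume the uncertain system defined by the interconnection of the augmented LTV system $G_a$ and the set of causal uncertainties $\mathbf{\Delta}$ is well-posed. Furthermore, assume each $\Delta \in \mathbf{\Delta}$ satisfies the time-domain IQCs defined by $\{ M_i \}_{i=1}^{m}\subset \mathbb{S}^{n_v+n_w}$. If there exist non-negative scalars $\{\lambda_i\}_{i=1}^m$ and a differentiable function $P:[0,T]\to \mathbb{S}^{n_x+1}$ such that $P(T)\succeq 0$ and, for all $t\in[0,T]$, \[ \begin{bmatrix} \dot{P} + A_a^\top P + P A_a & P B_a \\ B_a^\top P & 0 \end{bmatrix} + \begin{bmatrix} C_{e,a} & D_{ew} \end{bmatrix}^\top \begin{bmatrix} C_{e,a} & D_{ew} \end{bmatrix} + \sum_{i=1}^m \lambda_i \begin{bmatrix} C_{v,a} & D_{vw} \\ 0 & I \end{bmatrix}^\top M_i \begin{bmatrix} C_{v,a} & D_{vw} \\ 0 & I \end{bmatrix} \prec 0, \] then \[ \max_{\Delta \in \mathbf{\Delta}} \|\delta_e\|_{2,[0,T]} \le \left( \begin{bmatrix} 0\\ 1\end{bmatrix}^\top P(0) \begin{bmatrix} 0\\ 1 \end{bmatrix} \right)^{1/2}. \]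
   Context: Finite horizon $T<\infty$. The augmented LTV system $G_a$ with state $x_a(t)\in\mathbb{R}^{n_x+1}$ is $\dot{x}_a = A_a(t) x_a + B_a(t) w$, $v = C_{v,a}(t) x_a + D_{vw}(t) w$, $\delta_e = C_{e,a}(t) x_a + D_{ew}(t) w$, $x_a(0)=\begin{bmatrix}0\\1\end{bmatrix}$, where $A_a=\begin{bmatrix} A & 0\\ 0 & 0\end{bmatrix}$, $B_a=\begin{bmatrix} B\\0\end{bmatrix}$, $C_{v,a}=\begin{bmatrix} C_v & \bar v\end{bmatrix}$, $C_{e,a}=\begin{bmatrix} C_e & 0\end{bmatrix}$, with $(A,B,C_v,C_e,D_{vw},D_{ew})$ the time-varying matrices of the linearization of a nonlinear system along a nominal trajectory and $\bar v$ the nominal value of the signal $v$. The uncertainty is a causal operator $\Delta:\mathcal{L}_2^{n_v}[0,T]\to\mathcal{L}_2^{n_w}[0,T]$, $w=\Delta(v)$, in a set $\mathbf{\Delta}$. Well-posed means: for each $\Delta\in\mathbf{\Delta}$ there exist unique solutions $(x_a,v,w,\delta_e)$ in $\mathcal{L}_2[0,T]$ of the system equations with $x_a(0)=\begin{bmatrix}0\\1\end{bmatrix}$ and $w=\Delta(v)$. $\Delta$ satisfies the time-domain IQC defined by $M\in\mathbb{S}^{n_v+n_w}$ if $\int_0^T \begin{bmatrix} v\\ w\end{bmatrix}^\top M \begin{bmatrix} v\\ w\end{bmatrix} dt \ge 0$ for all $v\in\mathcal{L}_2^{n_v}[0,T]$ and $w=\Delta(v)$. $\|v\|_{2,[0,T]}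 = (\int_0^T v^\top v\,dt)^{1/2}$. *)

theory Defs
  imports "HOL-Analysis.Analysis"
begin

text \<open>Vectors are real^'n, matrices real^'c^'r (r rows, c columns).
  Block structure is encoded with sum index types: the vector [x; y] has index
  type 'a + 'b.  The augmented state space R^(n_x+1) uses index type 'nx + unit.\<close>

definition sym_mat :: "real^'n^'n \<Rightarrow> bool" where
  "sym_mat M \<longleftrightarrow> transpose M = M"

definition neg_def :: "real^'n^'n \<Rightarrow> bool" where
  "neg_def M \<longleftrightarrow> (\<forall>z. z \<noteq> 0 \<longrightarrow> z \<bullet> (M *v z) < 0)"

definition psd :: "real^'n^'n \<Rightarrow> bool" where
  "psd M \<longleftrightarrow> (\<forall>z. 0 \<le> z \<bullet> (M *v z))"

definition vcat :: "real^'a \<Rightarrow> real^'b \<Rightarrow> real^('a + 'b)" where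
  "vcat x y = (\<chi> i. case i of Inl a \<Rightarrow> x $ a | Inr b \<Rightarrow> y $ b)"

definition blk :: "real^'a^'r \<Rightarrow> real^'b^'r \<Rightarrow> real^'a^'s \<Rightarrow> real^'b^'s
                    \<Rightarrow> real^('a + 'b)^('r + 's)" where
  "blk A B C D = (\<chi> i j. case i of
       Inl r \<Rightarrow> (case j of Inl a \<Rightarrow> A $ r $ a | Inr b \<Rightarrow> B $ r $ b)
     | Inr s \<Rightarrow> (case j of Inl a \<Rightarrow> C $ s $ a | Inr b \<Rightarrow> D $ s $ b))"

definition hcat :: "real^'a^'r \<Rightarrow> real^'b^'r \<Rightarrow> real^('a + 'b)^'r" where
  "hcat A B = (\<chi> r j. case j of Inl a \<Rightarrow> A $ r $ a | Inr b \<Rightarrow> B $ r $ b)"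

definition vstack :: "real^'c^'r \<Rightarrow> real^'c^'s \<Rightarrow> real^'c^('r + 's)" where
  "vstack A B = (\<chi> i. case i of Inl r \<Rightarrow> A $ r | Inr s \<Rightarrow> B $ s)"

definition col :: "real^'r \<Rightarrow> real^unit^'r" where
  "col v = (\<chi> i j. v $ i)"

definition A_aug :: "real^'nx^'nx \<Rightarrow> real^('nx + unit)^('nx + unit)" where
  "A_aug A = blk A 0 0 0"

definition B_aug :: "real^'nw^'nx \<Rightarrow> real^'nw^('nx + unit)" where
  "B_aug B = vstack B 0"

definition Cv_aug :: "real^'nx^'nv \<Rightarrow> real^'nv \<Rightarrow> real^('nx + unit)^'nv" where
  "Cv_aug Cv vbar = hcat Cv (col vbar)"

definition Ce_aug :: "real^'nx^'ne \<Rightarrow> real^('nx + unit)^'ne" where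
  "Ce_aug Ce = hcat Ce 0"

definition x0_aug :: "real^('nx::finite + unit)" where
  "x0_aug = vcat 0 (\<chi> _. 1)"

definition L2 :: "real \<Rightarrow> (real \<Rightarrow> real^'n) \<Rightarrow> bool" where
  "L2 T f \<longleftrightarrow> f measurable_on {0..T} \<and> (\<lambda>t. (norm (f t))\<^sup>2) integrable_on {0..T}"

definition L2_norm :: "real \<Rightarrow> (real \<Rightarrow> real^'n) \<Rightarrow> real" where
  "L2_norm T f = sqrt (integral {0..T} (\<lambda>t. (norm (f t))\<^sup>2))"

text \<open>Equality as elements of L2[0,T] (i.e. almost everywhere).\<close>
definition L2_eq :: "real \<Rightarrow> (real \<Rightarrow> real^'n) \<Rightarrow> (real \<Rightarrow> real^'n) \<Rightarrow> bool" where
  "L2_eq T f g \<longleftrightarrow> integral {0..T} (\<lambda>t. (norm (f t - g t))\<^sup>2) = 0"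

definition causal_op :: "real \<Rightarrow> ((real \<Rightarrow> real^'nv) \<Rightarrow> (real \<Rightarrow> real^'nw)) \<Rightarrow> bool" where
  "causal_op T D \<longleftrightarrow>
     (\<forall>v. L2 T v \<longrightarrow> L2 T (D v)) \<and>
     (\<forall>v1 v2 \<tau>. \<tau> \<in> {0..T} \<longrightarrow> (\<forall>t\<in>{0..\<tau>}. v1 t = v2 t) \<longrightarrow>
                 (\<forall>t\<in>{0..\<tau>}. D v1 t = D v2 t))"

definition satisfies_IQC :: "real \<Rightarrow> ((real \<Rightarrow> real^'nv) \<Rightarrow> (real \<Rightarrow> real^'nw))
                              \<Rightarrow> real^('nv + 'nw)^('nv + 'nw) \<Rightarrow> bool" where
  "satisfies_IQC T D M \<longleftrightarrow>
     (\<forall>v. L2 T v \<longrightarrow>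
        integral {0..T} (\<lambda>t. vcat (v t) (D v t) \<bullet> (M *v vcat (v t) (D v t))) \<ge> 0)"

text \<open>(xa, v, w, de) solves the equations of G_a with w = D(v), all in L2[0,T];
  the state equation is understood in the Caratheodory (integral) sense.\<close>
definition solves_Ga ::
  "real \<Rightarrow> (real \<Rightarrow> real^'nx^'nx) \<Rightarrow> (real \<Rightarrow> real^'nw^'nx) \<Rightarrow> (real \<Rightarrow> real^'nx^'nv)
   \<Rightarrow> (real \<Rightarrow> real^'nx^'ne) \<Rightarrow> (real \<Rightarrow> real^'nw^'nv) \<Rightarrow> (real \<Rightarrow> real^'nw^'ne)
   \<Rightarrow> (real \<Rightarrow> real^'nv) \<Rightarrow> ((real \<Rightarrow> real^'nv) \<Rightarrow> (real \<Rightarrow> real^'nw))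
   \<Rightarrow> (real \<Rightarrow> real^('nx + unit)) \<Rightarrow> (real \<Rightarrow> real^'nv) \<Rightarrow> (real \<Rightarrow> real^'nw)
   \<Rightarrow> (real \<Rightarrow> real^'ne) \<Rightarrow> bool" where
  "solves_Ga T A B Cv Ce Dvw Dew vbar D xa v w de \<longleftrightarrow>
     L2 T xa \<and> L2 T v \<and> L2 T w \<and> L2 T de \<and>
     (\<forall>t\<in>{0..T}.
        (\<lambda>s. A_aug (A s) *v xa s + B_aug (B s) *v w s) integrable_on {0..t} \<and>
        xa t = x0_aug + integral {0..t} (\<lambda>s. A_aug (A s) *v xa s + B_aug (B s) *v w s)) \<and>
     (\<forall>t\<in>{0..T}. v t = Cv_aug (Cv t) (vbar t) *v xa t + Dvw t *v w t) \<and>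
     (\<forall>t\<in>{0..T}. de t = Ce_aug (Ce t) *v xa t + Dew t *v w t) \<and>
     (\<forall>t\<in>{0..T}. w t = D v t)"

definition well_posed ::
  "real \<Rightarrow> (real \<Rightarrow> real^'nx^'nx) \<Rightarrow> (real \<Rightarrow> real^'nw^'nx) \<Rightarrow> (real \<Rightarrow> real^'nx^'nv)
   \<Rightarrow> (real \<Rightarrow> real^'nx^'ne) \<Rightarrow> (real \<Rightarrow> real^'nw^'nv) \<Rightarrow> (real \<Rightarrow> real^'nw^'ne)
   \<Rightarrow> (real \<Rightarrow> real^'nv) \<Rightarrow> ((real \<Rightarrow> real^'nv) \<Rightarrow> (real \<Rightarrow> real^'nw)) set \<Rightarrow> bool" where
  "well_posed T A B Cv Ce Dvw Dew vbar Ds \<longleftrightarrow>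
     (\<forall>D\<in>Ds.
        (\<exists>xa v w de. solves_Ga T A B Cv Ce Dvw Dew vbar D xa v w de) \<and>
        (\<forall>xa v w de xa' v' w' de'.
            solves_Ga T A B Cv Ce Dvw Dew vbar D xa v w de \<longrightarrow>
            solves_Ga T A B Cv Ce Dvw Dew vbar D xa' v' w' de' \<longrightarrow>
            L2_eq T xa xa' \<and> L2_eq T v v' \<and> L2_eq T w w' \<and> L2_eq T de de'))"

definition LMI_mat ::
  "real^'nx^'nx \<Rightarrow> real^'nw^'nx \<Rightarrow> real^'nx^'nv \<Rightarrow> real^'nx^'ne \<Rightarrow> real^'nw^'nv
   \<Rightarrow> real^'nw^'ne \<Rightarrow> real^'nv \<Rightarrow> real^('nx + unit)^('nx + unit)
   \<Rightarrow> real^('nx + unit)^('nx + unit) \<Rightarrow> nat \<Rightarrow> (nat \<Rightarrow> real)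
   \<Rightarrow> (nat \<Rightarrow> real^('nv + 'nw)^('nv + 'nw))
   \<Rightarrow> real^(('nx + unit) + 'nw)^(('nx + unit) + 'nw)" where
  "LMI_mat A B Cv Ce Dvw Dew vb P Pdot m lam M =
     (let Aa = A_aug A; Ba = B_aug B; Cva = Cv_aug Cv vb; Cea = Ce_aug Ce;
          Lv = blk Cva Dvw 0 (mat 1 :: real^'nw^'nw);
          Le = hcat Cea Dew
      in blk (Pdot + transpose Aa ** P + P ** Aa) (P ** Ba) (transpose Ba ** P) 0
         + transpose Le ** Le
         + (\<Sum>i<m. lam i *\<^sub>R (transpose Lv ** M i ** Lv)))"

end

theory Submission
  imports Defs
begin

lemma sum_UNIV_plus: "(\<Sum>i\<in>(UNIV::('a::finite + 'b::finite) set). g i) = (\<Sum>a\<in>UNIV. g (Inl a)) + (\<Sum>b\<in>UNIV. g (Inr b))"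
  by (metis (no_types, lifting) UNIV_Plus_UNIV comp_apply finite sum.Plus sum.cong)

lemma blk_mult_vcat: "blk A B C D *v vcat x y = vcat (A *v x + B *v y) (C *v x + D *v y)"
  by (auto simp: vec_eq_iff blk_def vcat_def matrix_vector_mult_def sum_UNIV_plus split: sum.splits)

lemma hcat_mult_vcat: "hcat A B *v vcat x y = A *v x + B *v y"
  by (auto simp: vec_eq_iff hcat_def vcat_def matrix_vector_mult_def sum_UNIV_plus)

lemma inner_vcat: "vcat x y \<bullet> vcat x' y' = x \<bullet> x' + y \<bullet> y'"
  by (simp add: inner_vec_def vcat_def sum_UNIV_plus)

lemma inner_transpose: "(x::real^'n) \<bullet> (transpose A *v y) = (A *v x) \<bullet> (y::real^'m)"
  by (simp add: inner_vec_def transpose_def matrix_vector_mult_def sum_distrib_left sum_distrib_right mult_ac)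
     (rule sum.swap)

lemma sum_mat_mult: "(\<Sum>i<(m::nat). c i *\<^sub>R N i) *v (z::real^'n) = (\<Sum>i<m. c i *\<^sub>R (N i *v z))"
  by (induction m) (simp_all add: matrix_vector_mult_add_rdistrib scaleR_matrix_vector_assoc)

definition mn :: "real^'n^'m \<Rightarrow> real" where
  "mn A = (\<Sum>i\<in>UNIV. \<Sum>j\<in>UNIV. \<bar>A $ i $ j\<bar>)"

lemma mv_bound: "norm (A *v x) \<le> mn A * norm x"
proof -
  have "norm (A *v x) \<le> (\<Sum>i\<in>UNIV. \<bar>(A *v x) $ i\<bar>)"
    by (rule norm_le_l1_cart)
  also have "\<dots> \<le> (\<Sum>i\<in>UNIV. \<Sum>j\<in>UNIV. \<bar>A $ i $ j\<bar> * norm x)"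
  proof (rule sum_mono)
    fix i
    have "\<bar>(A *v x) $ i\<bar> \<le> \<bar>\<Sum>j\<in>UNIV. A $ i $ j * x $ j\<bar>"
      by (simp add: matrix_vector_mult_def)
    also have "\<dots> \<le> (\<Sum>j\<in>UNIV. \<bar>A $ i $ j * x $ j\<bar>)"
      by (rule sum_abs)
    also have "\<dots> \<le> (\<Sum>j\<in>UNIV. \<bar>A $ i $ j\<bar> * norm x)"
      by (rule sum_mono) (simp add: abs_mult component_le_norm_cart mult_left_mono)
    finally show "\<bar>(A *v x) $ i\<bar> \<le> (\<Sum>j\<in>UNIV. \<bar>A $ i $ j\<bar> * norm x)" .
  qed
  finally show ?thesis
    by (simp add: sum_distrib_right mn_def)
qed

lemma mn_nonneg: "0 \<le> mn A"
  by (simp add: mn_def sum_nonneg)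

lemma mn_add: "mn (A + B) \<le> mn A + mn B"
  unfolding mn_def by (simp add: sum.distrib[symmetric] sum_mono abs_triangle_ineq)

lemma mn_minus: "mn (- A) = mn A"
  unfolding mn_def by simp

lemma mn_diff: "mn (A - B) \<le> mn A + mn B"
  using mn_add[of A "-B"] by (simp add: mn_minus)

lemma mn_norm: "mn (A::real^'n^'m) \<le> real CARD('m) * real CARD('n) * norm A"
proof -
  have "\<And>i j. \<bar>A $ i $ j\<bar> \<le> norm A"
  proof -
    fix i j
    have "\<bar>A $ i $ j\<bar> \<le> norm (A $ i)" by (rule component_le_norm_cart)
    also have "norm (A $ i) \<le> norm A" by (rule Finite_Cartesian_Product.norm_nth_le)
    finally show "\<bar>A $ i $ j\<bar> \<le> norm A" .
  qed
  then have "mn A \<le> (\<Sum>i\<in>(UNIV::'m set). \<Sum>j\<in>(UNIV::'n set). norm A)"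
    unfolding mn_def by (intro sum_mono) auto
  then show ?thesis by simp
qed

lemma bil_bound: "\<bar>x \<bullet> (A *v y)\<bar> \<le> norm x * mn A * norm y"
proof -
  have "\<bar>x \<bullet> (A *v y)\<bar> \<le> norm x * norm (A *v y)" by (rule Cauchy_Schwarz_ineq2)
  also have "\<dots> \<le> norm x * (mn A * norm y)" by (simp add: mult_left_mono mv_bound)
  finally show ?thesis by (simp add: mult.assoc)
qed

lemma bil_bound2:
  assumes "norm x \<le> X" "mn M \<le> Mb" "norm y \<le> Y"
  shows "\<bar>x \<bullet> (M *v y)\<bar> \<le> X * Mb * Y"
proof -
  have "\<bar>x \<bullet> (M *v y)\<bar> \<le> norm x * mn M * norm y" by (rule bil_bound)
  also have "\<dots> \<le> X * Mb * Y"
  proof -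
    have X: "0 \<le> X" using assms(1) norm_ge_zero order_trans by blast
    have M: "0 \<le> Mb" using assms(2) mn_nonneg order_trans by blast
    show ?thesis using assms X M by (intro mult_mono) (auto intro: mult_mono mn_nonneg)
  qed
  finally show ?thesis .
qed

lemma elem_ident:
  fixes a b c f0 r :: "real^'n" and Pu Pv P0 Pd0 Rm :: "real^'n^'n"
  assumes "Rm = Pv - Pu - l *\<^sub>R Pd0" "r = l *\<^sub>R f0 - (c - b)"
  shows "c \<bullet> (Pv *v c) - b \<bullet> (Pu *v b) - l * (a \<bullet> (Pd0 *v a) + a \<bullet> (P0 *v f0) + f0 \<bullet> (P0 *v a))
     = b \<bullet> (Rm *v b) + l * ((b - a) \<bullet> (Pd0 *v b) + a \<bullet> (Pd0 *v (b - a)))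
       + (l * ((b - a) \<bullet> (Pv *v f0) + a \<bullet> ((Pv - P0) *v f0)) - b \<bullet> (Pv *v r))
       + (l * (f0 \<bullet> (Pv *v (b - a)) + f0 \<bullet> ((Pv - P0) *v a)) - r \<bullet> (Pv *v b))
       + (c - b) \<bullet> (Pv *v (c - b))"
proof -
  have Pu: "Pu = Pv - l *\<^sub>R Pd0 - Rm" using assms(1) by simp
  have c: "c = b + l *\<^sub>R f0 - r" using assms(2) by simp
  show ?thesis unfolding Pu c
    by (simp add: inner_add_left inner_add_right inner_diff_left inner_diff_right
        matrix_vector_mult_add_rdistrib matrix_vector_mult_diff_rdistrib
        matrix_vector_mult_diff_distrib matrix_vector_right_distrib
        matrix_vector_mult_scaleR scaleR_matrix_vector_assoc[symmetric] algebra_simps)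
qed

lemma elem_bound:
  fixes a b c f0 r :: "real^'n" and Pu Pv P0 Pd0 :: "real^'n^'n"
  assumes K1: "1 \<le> K" and nb: "norm b \<le> K" and na: "norm a \<le> K"
    and mPv: "mn Pv \<le> K"
    and e0: "0 \<le> e" "e \<le> 1" and l0: "0 \<le> l"
    and R: "mn (Pv - Pu - l *\<^sub>R Pd0) \<le> e * l"
    and ba: "norm (b - a) * (mn Pd0 + norm f0 + 1) \<le> e"
    and ca: "norm (c - a) * (norm f0 + 1) \<le> e"
    and PP: "mn (Pv - P0) * (norm f0 + 1) \<le> e"
    and rdef: "r = l *\<^sub>R f0 - (c - b)"
  shows "c \<bullet> (Pv *v c) - b \<bullet> (Pu *v b) - l * (a \<bullet> (Pd0 *v a) + a \<bullet> (P0 *v f0) + f0 \<bullet> (P0 *v a))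
     \<le> 12 * K^2 * (e * l + norm r)"
proof -
  define Rm where "Rm = Pv - Pu - l *\<^sub>R Pd0"
  define nba where "nba = norm (b - a)"
  define nca where "nca = norm (c - a)"
  define nf where "nf = norm f0"
  define mPd where "mPd = mn Pd0"
  define mPP where "mPP = mn (Pv - P0)"
  have nba0: "0 \<le> nba" "0 \<le> nca" "0 \<le> nf" "0 \<le> mPd" "0 \<le> mPP"
    by (simp_all add: nba_def nca_def nf_def mPd_def mPP_def mn_nonneg)
  have ba': "nba * mPd + nba * nf + nba \<le> e" using ba by (simp add: nba_def mPd_def nf_def algebra_simps)
  have ca': "nca * nf + nca \<le> e" using ca by (simp add: nca_def nf_def algebra_simps)
  have PP': "mPP * nf + mPP \<le> e" using PP by (simp add: mPP_def nf_def algebra_simps)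
  have h1: "nba * mPd \<le> e" "nba * nf \<le> e" "nba \<le> e" "nca * nf \<le> e" "nca \<le> e" "mPP * nf \<le> e"
    using ba' ca' PP' nba0 by (smt (verit) mult_nonneg_nonneg)+
  have K0: "0 \<le> K" using K1 by simp
  have eq: "c \<bullet> (Pv *v c) - b \<bullet> (Pu *v b) - l * (a \<bullet> (Pd0 *v a) + a \<bullet> (P0 *v f0) + f0 \<bullet> (P0 *v a))
     = b \<bullet> (Rm *v b) + l * ((b - a) \<bullet> (Pd0 *v b) + a \<bullet> (Pd0 *v (b - a)))
       + (l * ((b - a) \<bullet> (Pv *v f0) + a \<bullet> ((Pv - P0) *v f0)) - b \<bullet> (Pv *v r))
       + (l * (f0 \<bullet> (Pv *v (b - a)) + f0 \<bullet> ((Pv - P0) *v a)) - r \<bullet> (Pv *v b))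
       + (c - b) \<bullet> (Pv *v (c - b))"
    by (rule elem_ident[OF Rm_def rdef])
  have t1: "\<bar>b \<bullet> (Rm *v b)\<bar> \<le> K * (e * l) * K"
    using bil_bound2[OF nb _ nb, of Rm "e * l"] R Rm_def by simp
  have t2a: "\<bar>(b - a) \<bullet> (Pd0 *v b)\<bar> \<le> nba * mPd * K"
    using bil_bound2[OF order_refl order_refl nb] nba_def mPd_def by simp
  have t2b: "\<bar>a \<bullet> (Pd0 *v (b - a))\<bar> \<le> K * mPd * nba"
    using bil_bound2[OF na order_refl order_refl] nba_def mPd_def by simp
  have X2: "\<bar>(b - a) \<bullet> (Pd0 *v b) + a \<bullet> (Pd0 *v (b - a))\<bar> \<le> 2 * K * e"
  proof -
    have "nba * mPd * K \<le> e * K" using h1(1) K0 mult_right_mono by blast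
    moreover have "K * mPd * nba = nba * mPd * K" by simp
    moreover have "e * K = K * e" by simp
    ultimately show ?thesis using t2a t2b abs_triangle_ineq[of "(b - a) \<bullet> (Pd0 *v b)" "a \<bullet> (Pd0 *v (b - a))"] by linarith
  qed
  have t3a: "\<bar>(b - a) \<bullet> (Pv *v f0)\<bar> \<le> nba * K * nf"
    using bil_bound2[OF order_refl mPv order_refl] nba_def nf_def by simp
  have t3b: "\<bar>a \<bullet> ((Pv - P0) *v f0)\<bar> \<le> K * mPP * nf"
    using bil_bound2[OF na order_refl order_refl] mPP_def nf_def by simp
  have X3: "\<bar>(b - a) \<bullet> (Pv *v f0) + a \<bullet> ((Pv - P0) *v f0)\<bar> \<le> 2 * K * e"
  proof -
    have "nba * K * nf = K * (nba * nf)" by simp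
    also have "\<dots> \<le> K * e" using h1(2) K0 mult_left_mono by blast
    finally have A: "nba * K * nf \<le> K * e" .
    have "K * mPP * nf = K * (mPP * nf)" by simp
    also have "\<dots> \<le> K * e" using h1(6) K0 mult_left_mono by blast
    finally have B: "K * mPP * nf \<le> K * e" .
    show ?thesis using A B t3a t3b abs_triangle_ineq[of "(b - a) \<bullet> (Pv *v f0)" "a \<bullet> ((Pv - P0) *v f0)"] by linarith
  qed
  have Y3: "\<bar>b \<bullet> (Pv *v r)\<bar> \<le> K * K * norm r"
    using bil_bound2[OF nb mPv order_refl] by simp
  have t4a: "\<bar>f0 \<bullet> (Pv *v (b - a))\<bar> \<le> nf * K * nba"
    using bil_bound2[OF order_refl mPv order_refl] nba_def nf_def by simp
  have t4b: "\<bar>f0 \<bullet> ((Pv - P0) *v a)\<bar> \<le> nf * mPP * K"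
    using bil_bound2[OF order_refl order_refl na] mPP_def nf_def by simp
  have X4: "\<bar>f0 \<bullet> (Pv *v (b - a)) + f0 \<bullet> ((Pv - P0) *v a)\<bar> \<le> 2 * K * e"
  proof -
    have "nf * K * nba = K * (nba * nf)" by simp
    also have "\<dots> \<le> K * e" using h1(2) K0 mult_left_mono by blast
    finally have A: "nf * K * nba \<le> K * e" .
    have "nf * mPP * K = K * (mPP * nf)" by simp
    also have "\<dots> \<le> K * e" using h1(6) K0 mult_left_mono by blast
    finally have B: "nf * mPP * K \<le> K * e" .
    show ?thesis using A B t4a t4b abs_triangle_ineq[of "f0 \<bullet> (Pv *v (b - a))" "f0 \<bullet> ((Pv - P0) *v a)"] by linarith
  qed
  have Y4: "\<bar>r \<bullet> (Pv *v b)\<bar> \<le> norm r * K * K"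
    using bil_bound2[OF order_refl mPv nb] by simp
  define nD where "nD = norm (c - b)"
  have t5: "\<bar>(c - b) \<bullet> (Pv *v (c - b))\<bar> \<le> nD * K * nD"
    using bil_bound2[OF order_refl mPv order_refl] nD_def by simp
  have nD1: "nD \<le> nca + nba"
  proof -
    have "c - b = (c - a) - (b - a)" by simp
    then show ?thesis unfolding nD_def nca_def nba_def by (metis norm_triangle_ineq4)
  qed
  have nD2: "nD \<le> l * nf + norm r"
  proof -
    have "c - b = l *\<^sub>R f0 - r" using rdef by simp
    then have "nD \<le> norm (l *\<^sub>R f0) + norm r" unfolding nD_def by (metis norm_triangle_ineq4)
    then show ?thesis using l0 by (simp add: nf_def)
  qed
  have nD0: "0 \<le> nD" by (simp add: nD_def)
  have nD3: "nD * nD \<le> 2 * e * l + 2 * norm r"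
  proof -
    have "nD * nD \<le> nD * (l * nf + norm r)" using nD2 nD0 mult_left_mono by blast
    also have "\<dots> = (nD * nf) * l + nD * norm r" by (simp add: algebra_simps)
    also have "\<dots> \<le> (nca * nf + nba * nf) * l + 2 * norm r"
    proof -
      have "nD * nf \<le> (nca + nba) * nf" using nD1 nba0 mult_right_mono by blast
      then have A: "(nD * nf) * l \<le> (nca * nf + nba * nf) * l" using l0 mult_right_mono by (fastforce simp: algebra_simps)
      have "nD \<le> 2" using nD1 h1 e0 by linarith
      then have B: "nD * norm r \<le> 2 * norm r" using mult_right_mono by fastforce
      show ?thesis using A B by linarith
    qed
    also have "\<dots> \<le> (2 * e) * l + 2 * norm r"
    proof -
      have "nca * nf + nba * nf \<le> 2 * e" using h1 by linarith
      then show ?thesis using l0 mult_right_mono by fastforce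
    qed
    finally show ?thesis by simp
  qed
  have T5: "\<bar>(c - b) \<bullet> (Pv *v (c - b))\<bar> \<le> K * (2 * e * l + 2 * norm r)"
  proof -
    have "nD * K * nD = K * (nD * nD)" by simp
    also have "\<dots> \<le> K * (2 * e * l + 2 * norm r)" using nD3 K0 mult_left_mono by blast
    finally show ?thesis using t5 by linarith
  qed
  have L2: "l * ((b - a) \<bullet> (Pd0 *v b) + a \<bullet> (Pd0 *v (b - a))) \<le> l * (2 * K * e)"
    using X2 l0 by (meson abs_le_D1 mult_left_mono)
  have L3: "l * ((b - a) \<bullet> (Pv *v f0) + a \<bullet> ((Pv - P0) *v f0)) \<le> l * (2 * K * e)"
    using X3 l0 by (meson abs_le_D1 mult_left_mono)
  have L4: "l * (f0 \<bullet> (Pv *v (b - a)) + f0 \<bullet> ((Pv - P0) *v a)) \<le> l * (2 * K * e)"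
    using X4 l0 by (meson abs_le_D1 mult_left_mono)
  have sum: "c \<bullet> (Pv *v c) - b \<bullet> (Pu *v b) - l * (a \<bullet> (Pd0 *v a) + a \<bullet> (P0 *v f0) + f0 \<bullet> (P0 *v a))
     \<le> K * (e * l) * K + l * (2 * K * e) + l * (2 * K * e) + K * K * norm r + l * (2 * K * e)
        + norm r * K * K + K * (2 * e * l + 2 * norm r)"
    using eq t1 L2 L3 L4 Y3 Y4 T5 by (smt (verit) abs_le_D1 abs_minus_cancel)
  have KK: "K \<le> K^2" using K1 by (simp add: power2_eq_square)
  have el0: "0 \<le> e * l" using e0 l0 by simp
  have "K * (e * l) * K + l * (2 * K * e) + l * (2 * K * e) + K * K * norm r + l * (2 * K * e)
        + norm r * K * K + K * (2 * e * l + 2 * norm r)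
       = K^2 * (e * l) + 8 * (K * (e * l)) + 2 * (K^2 * norm r) + 2 * (K * norm r)"
    by (simp add: algebra_simps power2_eq_square)
  also have "\<dots> \<le> K^2 * (e * l) + 8 * (K^2 * (e * l)) + 2 * (K^2 * norm r) + 2 * (K^2 * norm r)"
    using mult_right_mono[OF KK el0] mult_right_mono[OF KK norm_ge_zero[of r]] by linarith
  also have "\<dots> \<le> 12 * K^2 * (e * l + norm r)"
  proof -
    have p: "0 \<le> K^2 * (e * l)" "0 \<le> K^2 * norm r" by (simp_all add: el0)
    have "12 * K^2 * (e * l + norm r) = 12 * (K^2 * (e * l)) + 12 * (K^2 * norm r)"
      by (simp add: algebra_simps)
    then show ?thesis using p by linarith
  qed
  finally show ?thesis using sum by linarith
qed

lemma mn_norm': "mn (A::real^'n^'n) \<le> (real CARD('n) * real CARD('n) + 1) * norm A"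
proof -
  have "mn A \<le> real CARD('n) * real CARD('n) * norm A" by (rule mn_norm)
  also have "\<dots> \<le> (real CARD('n) * real CARD('n) + 1) * norm A"
    by (intro mult_right_mono) auto
  finally show ?thesis .
qed

lemma key_local:
  fixes x f :: "real \<Rightarrow> real^'n" and P Pd :: "real \<Rightarrow> real^'n^'n"
  assumes xcont: "continuous_on {0..T} x" and Pcont: "continuous_on {0..T} P"
    and Pder: "(P has_vector_derivative Pd t) (at t within {0..T})"
    and t: "t \<in> {0..T}" and e: "0 < e"
  shows "\<exists>d>0. \<forall>s\<in>{0..T}. \<bar>s - t\<bar> < d \<longrightarrow>
           mn (P s - P t - (s - t) *\<^sub>R Pd t) \<le> e * \<bar>s - t\<bar> \<and>
           norm (x s - x t) * (mn (Pd t) + norm (f t) + 1) \<le> e \<and>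
           mn (P s - P t) * (norm (f t) + 1) \<le> e"
proof -
  define cc where "cc = real CARD('n) * real CARD('n) + 1"
  have cc: "1 \<le> cc" by (simp add: cc_def)
  have mnc: "\<And>A::real^'n^'n. mn A \<le> cc * norm A" unfolding cc_def by (rule mn_norm')
  define k1 where "k1 = mn (Pd t) + norm (f t) + 1"
  define k2 where "k2 = norm (f t) + 1"
  have k1: "1 \<le> k1" by (simp add: k1_def mn_nonneg)
  have k2: "1 \<le> k2" by (simp add: k2_def)
  from Pder have "(P has_derivative (\<lambda>h. h *\<^sub>R Pd t)) (at t within {0..T})"
    by (simp add: has_vector_derivative_def)
  then have "\<forall>e>0. \<exists>d>0. \<forall>y\<in>{0..T}. norm (y - t) < d \<longrightarrow>
      norm (P y - P t - (y - t) *\<^sub>R Pd t) \<le> e * norm (y - t)"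
    unfolding has_derivative_within_alt by blast
  moreover have ecc: "e / cc > 0" using e cc by simp
  ultimately obtain d1 where d1: "d1 > 0" and
    D1: "\<forall>y\<in>{0..T}. norm (y - t) < d1 \<longrightarrow>
      norm (P y - P t - (y - t) *\<^sub>R Pd t) \<le> (e / cc) * norm (y - t)"
    by blast
  have ek1: "e / k1 > 0" using e k1 by simp
  from xcont t ek1 obtain d2 where d2: "d2 > 0" and
    D2: "\<forall>y\<in>{0..T}. dist y t < d2 \<longrightarrow> dist (x y) (x t) < e / k1"
    unfolding continuous_on_iff by blast
  have ek2: "e / (cc * k2) > 0" using e k2 cc by simp
  from Pcont t ek2 obtain d3 where d3: "d3 > 0" and
    D3: "\<forall>y\<in>{0..T}. dist y t < d3 \<longrightarrow> dist (P y) (P t) < e / (cc * k2)"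
    unfolding continuous_on_iff by blast
  show ?thesis
  proof (intro exI[of _ "min d1 (min d2 d3)"] conjI ballI impI)
    show "0 < min d1 (min d2 d3)" using d1 d2 d3 by simp
  next
    fix s assume s: "s \<in> {0..T}" and sd: "\<bar>s - t\<bar> < min d1 (min d2 d3)"
    have "mn (P s - P t - (s - t) *\<^sub>R Pd t) \<le> cc * norm (P s - P t - (s - t) *\<^sub>R Pd t)"
      by (rule mnc)
    also have "\<dots> \<le> cc * ((e / cc) * norm (s - t))"
      using D1 s sd cc by (intro mult_left_mono) auto
    also have "\<dots> = e * \<bar>s - t\<bar>" using cc by simp
    finally show "mn (P s - P t - (s - t) *\<^sub>R Pd t) \<le> e * \<bar>s - t\<bar>" .
  next
    fix s assume s: "s \<in> {0..T}" and sd: "\<bar>s - t\<bar> < min d1 (min d2 d3)"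
    have "norm (x s - x t) < e / k1" using D2 s sd by (simp add: dist_norm)
    then have "norm (x s - x t) * k1 \<le> e" using k1 by (simp add: pos_less_divide_eq less_imp_le)
    then show "norm (x s - x t) * (mn (Pd t) + norm (f t) + 1) \<le> e" by (simp add: k1_def)
  next
    fix s assume s: "s \<in> {0..T}" and sd: "\<bar>s - t\<bar> < min d1 (min d2 d3)"
    have "norm (P s - P t) < e / (cc * k2)" using D3 s sd by (simp add: dist_norm)
    then have "cc * norm (P s - P t) * k2 \<le> e" using k2 cc
      by (simp add: pos_less_divide_eq less_imp_le mult_ac)
    moreover have "mn (P s - P t) * k2 \<le> cc * norm (P s - P t) * k2"
      using mnc k2 by (intro mult_right_mono) auto
    ultimately show "mn (P s - P t) * (norm (f t) + 1) \<le> e" by (simp add: k2_def)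
  qed
qed

lemma key_eps:
  fixes x f :: "real \<Rightarrow> real^'n" and P Pd :: "real \<Rightarrow> real^'n^'n" and h :: "real \<Rightarrow> real"
  assumes T0: "0 \<le> T"
    and fint: "f integrable_on {0..T}"
    and xdiff: "\<And>u v. 0 \<le> u \<Longrightarrow> u \<le> v \<Longrightarrow> v \<le> T \<Longrightarrow> integral {u..v} f = x v - x u"
    and xcont: "continuous_on {0..T} x" and Pcont: "continuous_on {0..T} P"
    and Pder: "\<And>t. t \<in> {0..T} \<Longrightarrow> (P has_vector_derivative Pd t) (at t within {0..T})"
    and hint: "h integrable_on {0..T}"
    and ineq: "\<And>t. t \<in> {0..T} \<Longrightarrow> x t \<bullet> (Pd t *v x t) + x t \<bullet> (P t *v f t) + f t \<bullet> (P t *v x t) \<le> - h t"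
    and K1: "1 \<le> K" and Kx: "\<And>t. t \<in> {0..T} \<Longrightarrow> norm (x t) \<le> K"
    and KP: "\<And>t. t \<in> {0..T} \<Longrightarrow> mn (P t) \<le> K"
    and e: "0 < e" "e \<le> 1"
  shows "x T \<bullet> (P T *v x T) - x 0 \<bullet> (P 0 *v x 0) + integral {0..T} h \<le> e * (1 + 12 * K^2 * (T + 1))"
proof -
  define \<phi> where "\<phi> t = x t \<bullet> (P t *v x t)" for t
  have "\<forall>t. \<exists>d>0. t \<in> {0..T} \<longrightarrow> (\<forall>s\<in>{0..T}. \<bar>s - t\<bar> < d \<longrightarrow>
           mn (P s - P t - (s - t) *\<^sub>R Pd t) \<le> e * \<bar>s - t\<bar> \<and>
           norm (x s - x t) * (mn (Pd t) + norm (f t) + 1) \<le> e \<and>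
           mn (P s - P t) * (norm (f t) + 1) \<le> e)"
  proof
    fix t
    show "\<exists>d>0. t \<in> {0..T} \<longrightarrow> (\<forall>s\<in>{0..T}. \<bar>s - t\<bar> < d \<longrightarrow>
           mn (P s - P t - (s - t) *\<^sub>R Pd t) \<le> e * \<bar>s - t\<bar> \<and>
           norm (x s - x t) * (mn (Pd t) + norm (f t) + 1) \<le> e \<and>
           mn (P s - P t) * (norm (f t) + 1) \<le> e)"
    proof (cases "t \<in> {0..T}")
      case True
      then show ?thesis using key_local[of T x P Pd t e f, OF xcont Pcont Pder[OF True] True e(1)] by blast
    next
      case False
      then show ?thesis by (intro exI[of _ 1]) auto
    qed
  qed
  then have "\<exists>\<delta>. \<forall>t. \<delta> t > 0 \<and> (t \<in> {0..T} \<longrightarrow> (\<forall>s\<in>{0..T}. \<bar>s - t\<bar> < \<delta> t \<longrightarrow>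
           mn (P s - P t - (s - t) *\<^sub>R Pd t) \<le> e * \<bar>s - t\<bar> \<and>
           norm (x s - x t) * (mn (Pd t) + norm (f t) + 1) \<le> e \<and>
           mn (P s - P t) * (norm (f t) + 1) \<le> e))"
    by (rule choice)
  then obtain \<delta> where \<delta>all: "\<forall>t. \<delta> t > 0 \<and> (t \<in> {0..T} \<longrightarrow> (\<forall>s\<in>{0..T}. \<bar>s - t\<bar> < \<delta> t \<longrightarrow>
           mn (P s - P t - (s - t) *\<^sub>R Pd t) \<le> e * \<bar>s - t\<bar> \<and>
           norm (x s - x t) * (mn (Pd t) + norm (f t) + 1) \<le> e \<and>
           mn (P s - P t) * (norm (f t) + 1) \<le> e))"
    by blast
  have \<delta>pos: "\<And>t. \<delta> t > 0" using \<delta>all by blast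
  have \<delta>: "\<And>t s. t \<in> {0..T} \<Longrightarrow> s \<in> {0..T} \<Longrightarrow> \<bar>s - t\<bar> < \<delta> t \<Longrightarrow>
           mn (P s - P t - (s - t) *\<^sub>R Pd t) \<le> e * \<bar>s - t\<bar> \<and>
           norm (x s - x t) * (mn (Pd t) + norm (f t) + 1) \<le> e \<and>
           mn (P s - P t) * (norm (f t) + 1) \<le> e"
    using \<delta>all by blast
  from Henstock_lemma[OF fint[unfolded cbox_interval[symmetric]] e(1)]
  obtain \<gamma>1 where g1: "gauge \<gamma>1" and
    H1: "\<And>p. p tagged_partial_division_of cbox 0 T \<Longrightarrow> \<gamma>1 fine p \<Longrightarrow>
             (\<Sum>(t,k)\<in>p. norm (measure lborel k *\<^sub>R f t - integral k f)) < e"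
    by blast
  from hint have hI: "(h has_integral integral {0..T} h) {0..T}" by (rule integrable_integral)
  have "\<exists>\<gamma>. gauge \<gamma> \<and> (\<forall>D. D tagged_division_of {0..T} \<and> \<gamma> fine D \<longrightarrow>
          norm ((\<Sum>(t,k)\<in>D. measure lborel k *\<^sub>R h t) - integral {0..T} h) < e)"
    by (rule has_integral_real[THEN iffD1, OF hI, rule_format, OF e(1)])
  then obtain \<gamma>2 where g2: "gauge \<gamma>2" and
    H2': "\<forall>D. D tagged_division_of {0..T} \<and> \<gamma>2 fine D \<longrightarrow>
          norm ((\<Sum>(t,k)\<in>D. measure lborel k *\<^sub>R h t) - integral {0..T} h) < e"
    by blast
  have H2: "\<And>p. p tagged_division_of {0..T} \<Longrightarrow> \<gamma>2 fine p \<Longrightarrow>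
             norm ((\<Sum>(t,k)\<in>p. measure lborel k *\<^sub>R h t) - integral {0..T} h) < e"
    using H2' by blast
  define \<gamma> where "\<gamma> t = ball t (\<delta> t) \<inter> (\<gamma>1 t \<inter> \<gamma>2 t)" for t
  have g: "gauge \<gamma>" unfolding \<gamma>_def
    by (intro gauge_Int g1 g2 gauge_ball_dependent) (simp add: \<delta>pos)
  obtain p where p: "p tagged_division_of cbox 0 T" and pf: "\<gamma> fine p"
    using fine_division_exists[OF g] by blast
  have pf1: "\<gamma>1 fine p" and pf2: "\<gamma>2 fine p" and pf3: "(\<lambda>t. ball t (\<delta> t)) fine p"
    using pf unfolding \<gamma>_def fine_Int by blast+
  have p': "p tagged_division_of {0..T}" using p by (simp add: cbox_interval)
  have pp: "p tagged_partial_division_of cbox 0 T" using p by (simp add: tagged_division_of_def)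
  have S1: "(\<Sum>(t,k)\<in>p. norm (measure lborel k *\<^sub>R f t - integral k f)) < e" by (rule H1[OF pp pf1])
  have S2: "norm ((\<Sum>(t,k)\<in>p. measure lborel k *\<^sub>R h t) - integral {0..T} h) < e" by (rule H2[OF p' pf2])
  have fin: "finite p" using p' by (rule tagged_division_ofD(1))
  define C where "C = 12 * K^2"
  have elem: "\<phi> (Sup k) - \<phi> (Inf k) \<le> - (measure lborel k * h t) + C * (e * measure lborel k)
                + C * norm (measure lborel k *\<^sub>R f t - integral k f)" if tk: "(t, k) \<in> p" for t k
  proof -
    obtain u v where k: "k = cbox u v" using tagged_division_ofD(4)[OF p' tk] by blast
    have tk': "t \<in> k" using tagged_division_ofD(2)[OF p' tk] .
    have ksub: "k \<subseteq> {0..T}" using tagged_division_ofD(3)[OF p' tk] .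
    have kb: "k \<subseteq> ball t (\<delta> t)" using fineD[OF pf3 tk] .
    have kuv: "k = {u..v}" using k by (simp add: cbox_interval)
    have ut: "u \<le> t" "t \<le> v" using tk' kuv by auto
    have uv: "u \<in> k" "v \<in> k" using ut kuv by auto
    have uI: "u \<in> {0..T}" and vI: "v \<in> {0..T}" and tI: "t \<in> {0..T}" using uv ksub tk' by auto
    have "u \<in> ball t (\<delta> t)" "v \<in> ball t (\<delta> t)" using uv kb by blast+
    then have "dist u t < \<delta> t" "dist v t < \<delta> t" by (simp_all add: dist_commute)
    then have ud: "\<bar>u - t\<bar> < \<delta> t" and vd: "\<bar>v - t\<bar> < \<delta> t" by (simp_all only: dist_real_def)
    have Inf: "Inf k = u" and Sup: "Sup k = v" using kuv ut by auto
    have cont: "measure lborel k = v - u" using kuv ut by simp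
    have u0: "0 \<le> u" and vT: "v \<le> T" using uI vI by simp_all
    have uv': "u \<le> v" using ut by simp
    have intk: "integral k f = x v - x u" unfolding kuv by (rule xdiff[OF u0 uv' vT])
    note du = \<delta>[OF tI uI ud] and dv = \<delta>[OF tI vI vd]
    have R: "mn (P v - P u - (v - u) *\<^sub>R Pd t) \<le> e * (v - u)"
    proof -
      have eq: "P v - P u - (v - u) *\<^sub>R Pd t = (P v - P t - (v - t) *\<^sub>R Pd t) - (P u - P t - (u - t) *\<^sub>R Pd t)"
        by (simp add: algebra_simps)
      have "mn (P v - P u - (v - u) *\<^sub>R Pd t) \<le> e * \<bar>v - t\<bar> + e * \<bar>u - t\<bar>"
        unfolding eq using mn_diff du dv by (smt (verit))
      also have "\<dots> = e * (v - u)" using ut by (simp add: algebra_simps)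
      finally show ?thesis .
    qed
    have ca: "norm (x v - x t) * (norm (f t) + 1) \<le> e"
    proof -
      have "norm (x v - x t) * (norm (f t) + 1) \<le> norm (x v - x t) * (mn (Pd t) + norm (f t) + 1)"
        by (intro mult_left_mono) (auto simp: mn_nonneg)
      then show ?thesis using dv by linarith
    qed
    have EB: "\<phi> v - \<phi> u - (v - u) * (x t \<bullet> (Pd t *v x t) + x t \<bullet> (P t *v f t) + f t \<bullet> (P t *v x t))
        \<le> 12 * K^2 * (e * (v - u) + norm ((v - u) *\<^sub>R f t - (x v - x u)))"
      unfolding \<phi>_def
      by (rule elem_bound[OF K1 Kx[OF uI] Kx[OF tI] KP[OF vI] less_imp_le[OF e(1)] e(2) _ R
            conjunct1[OF conjunct2[OF du]] ca conjunct2[OF conjunct2[OF dv]] refl])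
         (use ut in simp)
    have "(v - u) * (x t \<bullet> (Pd t *v x t) + x t \<bullet> (P t *v f t) + f t \<bullet> (P t *v x t)) \<le> (v - u) * (- h t)"
      using ineq[OF tI] ut by (intro mult_left_mono) auto
    then show ?thesis using EB unfolding Inf Sup cont intk C_def by (simp add: algebra_simps)
  qed
  have "(\<Sum>(t,k)\<in>p. \<phi> (Sup k) - \<phi> (Inf k)) \<le>
        (\<Sum>(t,k)\<in>p. - (measure lborel k * h t) + C * (e * measure lborel k) + C * norm (measure lborel k *\<^sub>R f t - integral k f))"
    using elem by (intro sum_mono) (auto split: prod.splits)
  also have "\<dots> = (\<Sum>i\<in>p. - (measure lborel (snd i) * h (fst i))) + (\<Sum>i\<in>p. C * (e * measure lborel (snd i)))
        + (\<Sum>i\<in>p. C * norm (measure lborel (snd i) *\<^sub>R f (fst i) - integral (snd i) f))"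
    by (simp only: split_def sum.distrib)
  also have "\<dots> = - (\<Sum>(t,k)\<in>p. measure lborel k *\<^sub>R h t) + C * e * (\<Sum>(t,k)\<in>p. measure lborel k)
        + C * (\<Sum>(t,k)\<in>p. norm (measure lborel k *\<^sub>R f t - integral k f))"
  proof -
    have a: "(\<Sum>i\<in>p. - (measure lborel (snd i) * h (fst i))) = - (\<Sum>(t,k)\<in>p. measure lborel k *\<^sub>R h t)"
      by (simp add: split_def sum_negf)
    have b: "(\<Sum>i\<in>p. C * (e * measure lborel (snd i))) = C * e * (\<Sum>(t,k)\<in>p. measure lborel k)"
      by (simp add: split_def sum_distrib_left mult.assoc)
    have c: "(\<Sum>i\<in>p. C * norm (measure lborel (snd i) *\<^sub>R f (fst i) - integral (snd i) f))
        = C * (\<Sum>(t,k)\<in>p. norm (measure lborel k *\<^sub>R f t - integral k f))"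
      by (simp add: split_def sum_distrib_left)
    show ?thesis by (simp only: a b c)
  qed
  finally have A: "\<phi> T - \<phi> 0 \<le> - (\<Sum>(t,k)\<in>p. measure lborel k *\<^sub>R h t) + C * e * (\<Sum>(t,k)\<in>p. measure lborel k)
        + C * (\<Sum>(t,k)\<in>p. norm (measure lborel k *\<^sub>R f t - integral k f))"
    using additive_tagged_division_1[OF T0 p', of \<phi>] by simp
  have sc: "(\<Sum>(t,k)\<in>p. measure lborel k) = T"
  proof -
    have "(\<Sum>(t,k)\<in>p. measure lborel k) = (\<Sum>(t,k)\<in>p. Sup k - Inf k)"
    proof (intro sum.cong refl)
      fix tk assume tk: "tk \<in> p"
      obtain t k where tk2: "tk = (t, k)" by fastforce
      obtain u v where k: "k = cbox u v" using tagged_division_ofD(4)[OF p'] tk tk2 by blast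
      have "t \<in> k" using tagged_division_ofD(2)[OF p'] tk tk2 by blast
      then have "u \<le> v" using k by (auto simp: cbox_interval)
      then show "(case tk of (t, k) \<Rightarrow> measure lborel k) = (case tk of (t, k) \<Rightarrow> Sup k - Inf k)"
        using tk2 k by (simp add: cbox_interval)
    qed
    also have "\<dots> = T" using additive_tagged_division_1[OF T0 p', of "\<lambda>x. x"] by simp
    finally show ?thesis .
  qed
  have C0: "0 \<le> C" by (simp add: C_def)
  have F1: "C * (\<Sum>(t,k)\<in>p. norm (measure lborel k *\<^sub>R f t - integral k f)) \<le> C * e"
    using S1 C0 by (intro mult_left_mono) auto
  have F2: "- (\<Sum>(t,k)\<in>p. measure lborel k *\<^sub>R h t) \<le> - integral {0..T} h + e"
    using S2 by (smt (verit) norm_minus_commute real_norm_def)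
  have "\<phi> T - \<phi> 0 \<le> - integral {0..T} h + e + C * e * T + C * e"
    using A[unfolded sc] F1 F2 by linarith
  then show ?thesis unfolding \<phi>_def C_def by (simp add: algebra_simps)
qed

lemma lin_vcat: "linear (\<lambda>z::((real^'a) \<times> (real^'b)). vcat (fst z) (snd z))"
  by (auto simp: linear_iff vcat_def vec_eq_iff split: sum.splits)

lemma cont_quad: "continuous_on UNIV (\<lambda>z::((real^'a) \<times> (real^'b)). vcat (fst z) (snd z) \<bullet> (M *v vcat (fst z) (snd z)))"
proof -
  have c1: "continuous_on UNIV (\<lambda>z::((real^'a) \<times> (real^'b)). vcat (fst z) (snd z))"
    using lin_vcat by (intro linear_continuous_on linear_conv_bounded_linear[THEN iffD1])
  have c2: "continuous_on UNIV (\<lambda>y. M *v y)"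
    by (intro linear_continuous_on matrix_vector_mul_bounded_linear)
  show ?thesis
    by (intro continuous_on_inner c1 continuous_on_compose2[OF c2 c1]) auto
qed

lemma Icc_lebesgue: "{0..(T::real)} \<in> sets lebesgue"
  by simp

lemma norm_vcat_sq: "(norm (vcat x y))^2 = (norm x)^2 + (norm y)^2"
  by (simp add: power2_norm_eq_inner inner_vcat)

lemma inner_vmul: "(x::real^'n) \<bullet> (y v* A) = (A *v x) \<bullet> (y::real^'m)"
  by (simp add: inner_vec_def vector_matrix_mult_def matrix_vector_mult_def sum_distrib_left sum_distrib_right mult_ac)
     (rule sum.swap)

lemma quad_integrable:
  fixes v :: "real \<Rightarrow> real^'a" and w :: "real \<Rightarrow> real^'b"
  assumes v: "L2 T v" and w: "L2 T w"
  shows "(\<lambda>t. vcat (v t) (w t) \<bullet> (M *v vcat (v t) (w t))) integrable_on {0..T}"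
proof (rule measurable_bounded_by_integrable_imp_integrable[OF _ _ _ Icc_lebesgue])
  have vm: "v \<in> borel_measurable (lebesgue_on {0..T})" and wm: "w \<in> borel_measurable (lebesgue_on {0..T})"
    using v w unfolding L2_def by (simp_all add: measurable_on_iff_borel_measurable[OF Icc_lebesgue])
  show "(\<lambda>t. vcat (v t) (w t) \<bullet> (M *v vcat (v t) (w t))) \<in> borel_measurable (lebesgue_on {0..T})"
    by (rule borel_measurable_continuous_Pair[OF vm wm]) (rule cont_quad)
  show "(\<lambda>t. mn M * ((norm (v t))^2 + (norm (w t))^2)) integrable_on {0..T}"
    using v w unfolding L2_def by (intro integrable_on_mult_right integrable_add) auto
  fix t
  have "norm (vcat (v t) (w t) \<bullet> (M *v vcat (v t) (w t))) \<le> norm (vcat (v t) (w t)) * mn M * norm (vcat (v t) (w t))"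
    using bil_bound by simp
  also have "\<dots> = mn M * ((norm (v t))^2 + (norm (w t))^2)"
    using norm_vcat_sq[of "v t" "w t"] by (simp add: power2_eq_square mult_ac)
  finally show "norm (vcat (v t) (w t) \<bullet> (M *v vcat (v t) (w t))) \<le> mn M * ((norm (v t))^2 + (norm (w t))^2)" .
qed

lemma LMI_quad:
  fixes a :: "real^('nx::finite + unit)" and w :: "real^'nw" and A :: "real^'nx^'nx" and B :: "real^'nw^'nx"
    and Cv :: "real^'nx^'nv" and Ce :: "real^'nx^'ne" and Dvw :: "real^'nw^'nv" and Dew :: "real^'nw^'ne"
    and vb :: "real^'nv" and P Pd :: "real^('nx + unit)^('nx + unit)" and m :: nat and lam :: "nat \<Rightarrow> real"
    and M :: "nat \<Rightarrow> real^('nv + 'nw)^('nv + 'nw)"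
  shows "vcat a w \<bullet> (LMI_mat A B Cv Ce Dvw Dew vb P Pd m lam M *v vcat a w) =
     a \<bullet> (Pd *v a) + a \<bullet> (P *v (A_aug A *v a + B_aug B *v w)) + (A_aug A *v a + B_aug B *v w) \<bullet> (P *v a)
     + (norm (Ce_aug Ce *v a + Dew *v w))^2
     + (\<Sum>i<m. lam i * (vcat (Cv_aug Cv vb *v a + Dvw *v w) w \<bullet> (M i *v vcat (Cv_aug Cv vb *v a + Dvw *v w) w)))"
proof -
  let ?Aa = "A_aug A" and ?Ba = "B_aug B" and ?Cva = "Cv_aug Cv vb" and ?Cea = "Ce_aug Ce"
  let ?Lv = "blk ?Cva Dvw 0 (mat 1 :: real^'nw^'nw)" and ?Le = "hcat ?Cea Dew"
  let ?z = "vcat a w"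
  have Lvz: "?Lv *v ?z = vcat (?Cva *v a + Dvw *v w) w"
    by (simp add: blk_mult_vcat matrix_vector_mult_0)
  have Lez: "?Le *v ?z = ?Cea *v a + Dew *v w"
    by (simp add: hcat_mult_vcat)
  have q1: "?z \<bullet> (blk (Pd + transpose ?Aa ** P + P ** ?Aa) (P ** ?Ba) (transpose ?Ba ** P) 0 *v ?z)
      = a \<bullet> (Pd *v a) + a \<bullet> (P *v (?Aa *v a + ?Ba *v w)) + (?Aa *v a + ?Ba *v w) \<bullet> (P *v a)"
    by (simp add: blk_mult_vcat inner_vcat matrix_vector_mult_add_rdistrib
        matrix_vector_mul_assoc[symmetric] inner_transpose inner_vmul inner_add_left inner_add_right
        matrix_vector_right_distrib algebra_simps)
  have q2: "?z \<bullet> ((transpose ?Le ** ?Le) *v ?z) = (norm (?Cea *v a + Dew *v w))^2"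
    by (simp add: matrix_vector_mul_assoc[symmetric] inner_transpose inner_vmul Lez power2_norm_eq_inner)
  have q3: "?z \<bullet> ((\<Sum>i<m. lam i *\<^sub>R (transpose ?Lv ** M i ** ?Lv)) *v ?z)
      = (\<Sum>i<m. lam i * (vcat (?Cva *v a + Dvw *v w) w \<bullet> (M i *v vcat (?Cva *v a + Dvw *v w) w)))"
    by (simp add: sum_mat_mult inner_sum_right matrix_vector_mul_assoc[symmetric] inner_transpose inner_vmul Lvz)
  show ?thesis
    unfolding LMI_mat_def Let_def
    by (simp only: matrix_vector_mult_add_rdistrib inner_add_right q1 q2 q3)
qed

lemma key:
  fixes x f :: "real \<Rightarrow> real^'n" and P Pd :: "real \<Rightarrow> real^'n^'n" and h :: "real \<Rightarrow> real"
  assumes T0: "0 \<le> T"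
    and fint: "f integrable_on {0..T}"
    and xeq: "\<And>t. t \<in> {0..T} \<Longrightarrow> x t = x0 + integral {0..t} f"
    and Pder: "\<And>t. t \<in> {0..T} \<Longrightarrow> (P has_vector_derivative Pd t) (at t within {0..T})"
    and hint: "h integrable_on {0..T}"
    and ineq: "\<And>t. t \<in> {0..T} \<Longrightarrow> x t \<bullet> (Pd t *v x t) + x t \<bullet> (P t *v f t) + f t \<bullet> (P t *v x t) \<le> - h t"
  shows "x T \<bullet> (P T *v x T) - x 0 \<bullet> (P 0 *v x 0) \<le> - integral {0..T} h"
proof -
  have c0: "continuous_on {0..T} (\<lambda>t. x0 + integral {0..t} f)"
    by (intro continuous_intros indefinite_integral_continuous_1 fint)
  have xcont: "continuous_on {0..T} x"
    by (rule continuous_on_eq[OF c0]) (simp add: xeq)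
  have Pcont: "continuous_on {0..T} P"
    unfolding continuous_on_eq_continuous_within using Pder has_vector_derivative_continuous by blast
  have xdiff: "integral {u..v} f = x v - x u" if "0 \<le> u" "u \<le> v" "v \<le> T" for u v
  proof -
    have fv: "f integrable_on {0..v}" by (rule integrable_subinterval_real[OF fint]) (use that in auto)
    have "integral {0..u} f + integral {u..v} f = integral {0..v} f"
      by (rule Henstock_Kurzweil_Integration.integral_combine[OF that(1,2) fv])
    moreover have "x u = x0 + integral {0..u} f" "x v = x0 + integral {0..v} f" using that xeq by auto
    ultimately show ?thesis by (simp add: algebra_simps)
  qed
  have "bounded (x ` {0..T})" by (rule compact_imp_bounded[OF compact_continuous_image[OF xcont compact_Icc]])
  then obtain Bx where Bx: "\<And>t. t \<in> {0..T} \<Longrightarrow> norm (x t) \<le> Bx" unfolding bounded_iff by blast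
  have "bounded (P ` {0..T})" by (rule compact_imp_bounded[OF compact_continuous_image[OF Pcont compact_Icc]])
  then obtain BP where BP: "\<And>t. t \<in> {0..T} \<Longrightarrow> norm (P t) \<le> BP" unfolding bounded_iff by blast
  define cc where "cc = real CARD('n) * real CARD('n) + 1"
  define K where "K = max 1 (max Bx (cc * BP))"
  have K1: "1 \<le> K" by (simp add: K_def)
  have Kx: "\<And>t. t \<in> {0..T} \<Longrightarrow> norm (x t) \<le> K" using Bx unfolding K_def by fastforce
  have KP: "mn (P t) \<le> K" if "t \<in> {0..T}" for t
  proof -
    have "mn (P t) \<le> cc * norm (P t)" unfolding cc_def by (rule mn_norm')
    also have "\<dots> \<le> cc * BP" using BP[OF that] by (intro mult_left_mono) (auto simp: cc_def)
    also have "\<dots> \<le> K" by (simp add: K_def)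
    finally show ?thesis .
  qed
  define Q where "Q = 1 + 12 * K^2 * (T + 1)"
  have Q0: "0 < Q" using T0 by (simp add: Q_def add_pos_nonneg)
  define \<Phi> where "\<Phi> = x T \<bullet> (P T *v x T) - x 0 \<bullet> (P 0 *v x 0) + integral {0..T} h"
  have bnd: "\<Phi> \<le> e * Q" if "0 < e" "e \<le> 1" for e
    unfolding \<Phi>_def Q_def
    by (rule key_eps[OF T0 fint xdiff xcont Pcont Pder hint ineq K1 Kx KP that]) auto
  have "\<Phi> \<le> 0"
  proof (rule ccontr)
    assume "\<not> \<Phi> \<le> 0"
    then have pos: "0 < \<Phi>" by simp
    define e where "e = min 1 (\<Phi> / (2 * Q))"
    have e0: "0 < e" "e \<le> 1" using pos Q0 by (auto simp: e_def)
    have "\<Phi> \<le> e * Q" by (rule bnd[OF e0])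
    also have "\<dots> \<le> (\<Phi> / (2 * Q)) * Q" using Q0 by (intro mult_right_mono) (auto simp: e_def)
    also have "\<dots> = \<Phi> / 2" using Q0 by simp
    finally show False using pos by simp
  qed
  then show ?thesis unfolding \<Phi>_def by simp
qed

theorem theorem1:
  fixes T :: real
    and A :: "real \<Rightarrow> real^'nx^'nx" and B :: "real \<Rightarrow> real^'nw^'nx"
    and Cv :: "real \<Rightarrow> real^'nx^'nv" and Ce :: "real \<Rightarrow> real^'nx^'ne"
    and Dvw :: "real \<Rightarrow> real^'nw^'nv" and Dew :: "real \<Rightarrow> real^'nw^'ne"
    and vbar :: "real \<Rightarrow> real^'nv"
    and Ds :: "((real \<Rightarrow> real^'nv) \<Rightarrow> (real \<Rightarrow> real^'nw)) set"
    and m :: nat and M :: "nat \<Rightarrow> real^('nv + 'nw)^('nv + 'nw)"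
    and lam :: "nat \<Rightarrow> real"
    and P :: "real \<Rightarrow> real^('nx + unit)^('nx + unit)"
  assumes T_pos: "0 < T"
    and causal: "\<forall>D\<in>Ds. causal_op T D"
    and wp: "well_posed T A B Cv Ce Dvw Dew vbar Ds"
    and M_sym: "\<forall>i<m. sym_mat (M i)"
    and IQCs: "\<forall>D\<in>Ds. \<forall>i<m. satisfies_IQC T D (M i)"
    and lam_nonneg: "\<forall>i<m. 0 \<le> lam i"
    and P_sym: "\<forall>t\<in>{0..T}. sym_mat (P t)"
    and P_diff: "\<forall>t\<in>{0..T}. P differentiable (at t within {0..T})"
    and P_T: "psd (P T)"
    and LMI: "\<forall>t\<in>{0..T}. neg_def (LMI_mat (A t) (B t) (Cv t) (Ce t) (Dvw t) (Dew t) (vbar t)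
                 (P t) (vector_derivative P (at t within {0..T})) m lam M)"
  shows "\<forall>D\<in>Ds. \<forall>xa v w de. solves_Ga T A B Cv Ce Dvw Dew vbar D xa v w de \<longrightarrow>
           L2_norm T de \<le> sqrt (x0_aug \<bullet> (P 0 *v x0_aug))"
proof (intro ballI allI impI)
  fix D xa v w de
  assume D: "D \<in> Ds" and sol: "solves_Ga T A B Cv Ce Dvw Dew vbar D xa v w de"
  note S = sol[unfolded solves_Ga_def]
  have Lv: "L2 T v" using S by (elim conjE)
  have Lw: "L2 T w" using S by (elim conjE)
  have Lde: "L2 T de" using S by (elim conjE)
  have int: "\<forall>t\<in>{0..T}. (\<lambda>s. A_aug (A s) *v xa s + B_aug (B s) *v w s) integrable_on {0..t} \<and>
        xa t = x0_aug + integral {0..t} (\<lambda>s. A_aug (A s) *v xa s + B_aug (B s) *v w s)"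
    using S by (elim conjE)
  have veq: "\<forall>t\<in>{0..T}. v t = Cv_aug (Cv t) (vbar t) *v xa t + Dvw t *v w t"
    using S by (elim conjE)
  have deeq: "\<forall>t\<in>{0..T}. de t = Ce_aug (Ce t) *v xa t + Dew t *v w t"
    using S by (elim conjE)
  have weq: "\<forall>t\<in>{0..T}. w t = D v t"
    using S by (elim conjE)
  define f where "f s = A_aug (A s) *v xa s + B_aug (B s) *v w s" for s
  have T0: "0 \<le> T" using T_pos by simp
  have TI: "T \<in> {0..T}" using T0 by simp
  have fint: "f integrable_on {0..T}" using int TI unfolding f_def by blast
  have xeq: "\<And>t. t \<in> {0..T} \<Longrightarrow> xa t = x0_aug + integral {0..t} f" using int unfolding f_def by blast
  have xa0: "xa 0 = x0_aug" using xeq[of 0] T0 by simp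
  define Pd where "Pd t = vector_derivative P (at t within {0..T})" for t
  have Pder: "\<And>t. t \<in> {0..T} \<Longrightarrow> (P has_vector_derivative Pd t) (at t within {0..T})"
  proof -
    fix t assume "t \<in> {0..T}"
    then have "P differentiable (at t within {0..T})" by (rule bspec[OF P_diff])
    then show "(P has_vector_derivative Pd t) (at t within {0..T})"
      unfolding Pd_def by (rule vector_derivative_works[THEN iffD1])
  qed
  define q where "q i t = vcat (v t) (w t) \<bullet> (M i *v vcat (v t) (w t))" for i t
  define h where "h t = (norm (de t))^2 + (\<Sum>i<m. lam i * q i t)" for t
  have qint: "\<And>i. q i integrable_on {0..T}" unfolding q_def by (rule quad_integrable[OF Lv Lw])
  have deint: "(\<lambda>t. (norm (de t))^2) integrable_on {0..T}" using Lde unfolding L2_def by blast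
  have sint: "(\<lambda>t. \<Sum>i<m. lam i * q i t) integrable_on {0..T}"
    by (intro integrable_sum integrable_on_mult_right qint) auto
  have hint: "h integrable_on {0..T}" unfolding h_def by (intro integrable_add deint sint)
  have ineq: "xa t \<bullet> (Pd t *v xa t) + xa t \<bullet> (P t *v f t) + f t \<bullet> (P t *v xa t) \<le> - h t"
    if tI: "t \<in> {0..T}" for t
  proof -
    have nd: "neg_def (LMI_mat (A t) (B t) (Cv t) (Ce t) (Dvw t) (Dew t) (vbar t) (P t) (Pd t) m lam M)"
      unfolding Pd_def by (rule bspec[OF LMI tI])
    have "vcat (xa t) (w t) \<bullet> (LMI_mat (A t) (B t) (Cv t) (Ce t) (Dvw t) (Dew t) (vbar t) (P t) (Pd t) m lam M *v vcat (xa t) (w t)) \<le> 0"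
      using nd unfolding neg_def_def
      by (cases "vcat (xa t) (w t) = 0") (auto intro: less_imp_le)
    then show ?thesis
      unfolding LMI_quad h_def q_def f_def using veq deeq tI by simp
  qed
  have Kf: "xa T \<bullet> (P T *v xa T) - xa 0 \<bullet> (P 0 *v xa 0) \<le> - integral {0..T} h"
    by (rule key[where x=xa and f=f and P=P and Pd=Pd and h=h and T=T, OF T0 fint xeq Pder hint ineq])
  have ih: "integral {0..T} h = integral {0..T} (\<lambda>t. (norm (de t))^2) + (\<Sum>i<m. lam i * integral {0..T} (q i))"
  proof -
    have "integral {0..T} h = integral {0..T} (\<lambda>t. (norm (de t))^2) + integral {0..T} (\<lambda>t. \<Sum>i<m. lam i * q i t)"
      unfolding h_def by (rule integral_add[OF deint sint])
    also have "integral {0..T} (\<lambda>t. \<Sum>i<m. lam i * q i t) = (\<Sum>i<m. integral {0..T} (\<lambda>t. lam i * q i t))"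
      by (rule integral_sum) (simp_all add: integrable_on_mult_right qint)
    also have "\<dots> = (\<Sum>i<m. lam i * integral {0..T} (q i))"
      by (intro sum.cong refl) (rule integral_mult[OF qint, symmetric])
    finally show ?thesis .
  qed
  have qnn: "0 \<le> integral {0..T} (q i)" if "i < m" for i
  proof -
    have "satisfies_IQC T D (M i)" using IQCs D that by blast
    then have iq: "\<forall>u. L2 T u \<longrightarrow> 0 \<le> integral {0..T} (\<lambda>t. vcat (u t) (D u t) \<bullet> (M i *v vcat (u t) (D u t)))"
      unfolding satisfies_IQC_def .
    have "0 \<le> integral {0..T} (\<lambda>t. vcat (v t) (D v t) \<bullet> (M i *v vcat (v t) (D v t)))"
      using iq[THEN spec[where x=v]] Lv by (rule mp)
    also have "\<dots> = integral {0..T} (q i)"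
    proof (rule integral_cong)
      fix t assume "t \<in> {0..T}"
      then have "w t = D v t" using weq by blast
      then show "vcat (v t) (D v t) \<bullet> (M i *v vcat (v t) (D v t)) = q i t" by (simp add: q_def)
    qed
    finally show ?thesis .
  qed
  have snn: "0 \<le> (\<Sum>i<m. lam i * integral {0..T} (q i))"
    using qnn lam_nonneg by (intro sum_nonneg mult_nonneg_nonneg) auto
  have PTn: "0 \<le> xa T \<bullet> (P T *v xa T)" using P_T unfolding psd_def by blast
  have main: "integral {0..T} (\<lambda>t. (norm (de t))^2) \<le> x0_aug \<bullet> (P 0 *v x0_aug)"
    using Kf[unfolded xa0 ih] snn PTn by linarith
  show "L2_norm T de \<le> sqrt (x0_aug \<bullet> (P 0 *v x0_aug))"
    unfolding L2_norm_def using main by (rule real_sqrt_le_mono)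
qed

end
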